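(* Let $C=(C_{i,j})$ be an $m\times n$ evolutionary stable (ES) configuration. Then there are no indices $i,j$ (with all positions below lying in the grid) such that either (Type III) $C_{i-1,j-1}=C_{i,j}=C_{i+1,j+1}=0$ and $C_{i+2,l}=1$ for all $l$ with $j+1\le l\le n$; or (Type IV) $C_{i-1,j-1}=C_{i,j}=C_{i+1,j+1}=0$ and, for all $l$ with $j+1\le l\le n$, $C_{i+1,l}=0$ if $l-(j+1)\equiv 0 \pmod 3$ and $C_{i+1,l}=1$ otherwise. The same holds for the mirror images of these two constellations under the reflection $j\mapsto n+1-j$ of columns (with the row patterns then extending to the left border).
   Context: An $m\times n$ configuration is a $0$-$1$ matrix $C=(C_{i,j})$, $1\le i\le m$, $1\le j\le n$; $C_{i,j}=1$ means lot $(i,j)$ is occupied by a house. Row $1$ is the northernmost, row $m$ the southernmost; column $1$ westernmost, column $n$ easternmost. A house at $(i,j)$ is blocked from sunlight if the three lots $(i,j-1)$, $(i,j+1)$, $(i+1,j)$ all lie inside the grid and are all occupied (lots outside the grid never obstruct sunlight). $C$ is permissible if no house is blocked, and maximal if it is permissible and setting any single empty lot to $1$ yields a non-permissible configuration. A maximal configuration is resistant to predators if, for every empty lot, putting a house on it results in that new house being blocked; it is resistant to altruists if, for every empty lot, putting a house on it results in some other (already existing) house being blocked. An ES configuration is a maximal configuration resistant to both predators and altruists. *)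

theory Defs
  imports Main
begin

text \<open>An m x n configuration is a function C :: nat => nat => bool; C i j = True means
  lot (i,j) is occupied.  Only the values for 1 <= i <= m, 1 <= j <= n matter.\<close>

definition inside :: "nat \<Rightarrow> nat \<Rightarrow> nat \<Rightarrow> nat \<Rightarrow> bool" where
  "inside m n i j \<longleftrightarrow> 1 \<le> i \<and> i \<le> m \<and> 1 \<le> j \<and> j \<le> n"

definition blocked :: "nat \<Rightarrow> nat \<Rightarrow> (nat \<Rightarrow> nat \<Rightarrow> bool) \<Rightarrow> nat \<Rightarrow> nat \<Rightarrow> bool" where
  "blocked m n C i j \<longleftrightarrow> inside m n i j \<and> C i j \<and>
     2 \<le> j \<and> j + 1 \<le> n \<and> i + 1 \<le> m \<and>
     C i (j - 1) \<and> C i (j + 1) \<and> C (i + 1) j"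

definition permissible :: "nat \<Rightarrow> nat \<Rightarrow> (nat \<Rightarrow> nat \<Rightarrow> bool) \<Rightarrow> bool" where
  "permissible m n C \<longleftrightarrow> (\<forall>i j. \<not> blocked m n C i j)"

definition place :: "(nat \<Rightarrow> nat \<Rightarrow> bool) \<Rightarrow> nat \<Rightarrow> nat \<Rightarrow> (nat \<Rightarrow> nat \<Rightarrow> bool)" where
  "place C i j = (\<lambda>a b. if a = i \<and> b = j then True else C a b)"

definition maximal :: "nat \<Rightarrow> nat \<Rightarrow> (nat \<Rightarrow> nat \<Rightarrow> bool) \<Rightarrow> bool" where
  "maximal m n C \<longleftrightarrow> permissible m n C \<and>
     (\<forall>i j. inside m n i j \<and> \<not> C i j \<longrightarrow> \<not> permissible m n (place C i j))"

definition resistant_predators :: "nat \<Rightarrow> nat \<Rightarrow> (nat \<Rightarrow> nat \<Rightarrow> bool) \<Rightarrow> bool" where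
  "resistant_predators m n C \<longleftrightarrow> maximal m n C \<and>
     (\<forall>i j. inside m n i j \<and> \<not> C i j \<longrightarrow> blocked m n (place C i j) i j)"

definition resistant_altruists :: "nat \<Rightarrow> nat \<Rightarrow> (nat \<Rightarrow> nat \<Rightarrow> bool) \<Rightarrow> bool" where
  "resistant_altruists m n C \<longleftrightarrow> maximal m n C \<and>
     (\<forall>i j. inside m n i j \<and> \<not> C i j \<longrightarrow>
        (\<exists>i' j'. (i', j') \<noteq> (i, j) \<and> inside m n i' j' \<and> C i' j' \<and>
                 blocked m n (place C i j) i' j'))"

definition ES :: "nat \<Rightarrow> nat \<Rightarrow> (nat \<Rightarrow> nat \<Rightarrow> bool) \<Rightarrow> bool" where
  "ES m n C \<longleftrightarrow> maximal m n C \<and> resistant_predators m n C \<and> resistant_altruists m n C"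

definition typeIII :: "nat \<Rightarrow> nat \<Rightarrow> (nat \<Rightarrow> nat \<Rightarrow> bool) \<Rightarrow> nat \<Rightarrow> nat \<Rightarrow> bool" where
  "typeIII m n C i j \<longleftrightarrow> 2 \<le> i \<and> i + 2 \<le> m \<and> 2 \<le> j \<and> j + 1 \<le> n \<and>
     \<not> C (i - 1) (j - 1) \<and> \<not> C i j \<and> \<not> C (i + 1) (j + 1) \<and>
     (\<forall>l. j + 1 \<le> l \<and> l \<le> n \<longrightarrow> C (i + 2) l)"

definition typeIV :: "nat \<Rightarrow> nat \<Rightarrow> (nat \<Rightarrow> nat \<Rightarrow> bool) \<Rightarrow> nat \<Rightarrow> nat \<Rightarrow> bool" where
  "typeIV m n C i j \<longleftrightarrow> 2 \<le> i \<and> i + 1 \<le> m \<and> 2 \<le> j \<and> j + 1 \<le> n \<and>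
     \<not> C (i - 1) (j - 1) \<and> \<not> C i j \<and> \<not> C (i + 1) (j + 1) \<and>
     (\<forall>l. j + 1 \<le> l \<and> l \<le> n \<longrightarrow>
        (C (i + 1) l \<longleftrightarrow> (l - (j + 1)) mod 3 \<noteq> 0))"

definition reflect :: "nat \<Rightarrow> (nat \<Rightarrow> nat \<Rightarrow> bool) \<Rightarrow> (nat \<Rightarrow> nat \<Rightarrow> bool)" where
  "reflect n C = (\<lambda>i j. C i (n + 1 - j))"

end

theory Submission
  imports Defs
begin



definition good :: "nat \<Rightarrow> nat \<Rightarrow> (nat \<Rightarrow> nat \<Rightarrow> bool) \<Rightarrow> bool" where
  "good m n C \<longleftrightarrow>
    (\<forall>a c. 1 \<le> a \<longrightarrow> a \<le> m \<longrightarrow> 1 \<le> c \<longrightarrow> c \<le> n \<longrightarrow> \<not> C a c \<longrightarrow>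
       2 \<le> c \<and> c + 1 \<le> n \<and> a + 1 \<le> m \<and> C a (c - 1) \<and> C a (c + 1) \<and> C (a + 1) c) \<and>
    (\<forall>a c. 1 \<le> a \<longrightarrow> a + 1 \<le> m \<longrightarrow> 2 \<le> c \<longrightarrow> c + 1 \<le> n \<longrightarrow> C a c \<longrightarrow>
       C a (c - 1) \<longrightarrow> C a (c + 1) \<longrightarrow> \<not> C (a + 1) c) \<and>
    (\<forall>a c. 1 \<le> a \<longrightarrow> a \<le> m \<longrightarrow> 1 \<le> c \<longrightarrow> c \<le> n \<longrightarrow> \<not> C a c \<longrightarrow>
       (3 \<le> c \<and> C a (c - 2) \<and> C (a + 1) (c - 1)) \<or>
       (c + 2 \<le> n \<and> C a (c + 2) \<and> C (a + 1) (c + 1)) \<or>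
       (2 \<le> a \<and> C (a - 1) (c - 1) \<and> C (a - 1) c \<and> C (a - 1) (c + 1)))"

lemma ES_good:
  assumes "ES m n C" shows "good m n C"
proof -
  have mx: "maximal m n C" and rp: "resistant_predators m n C" and ra: "resistant_altruists m n C"
    using assms by (auto simp: ES_def)
  have perm: "\<And>i j. \<not> blocked m n C i j" using mx by (auto simp: maximal_def permissible_def)
  have P1: "\<And>a c. 1 \<le> a \<Longrightarrow> a \<le> m \<Longrightarrow> 1 \<le> c \<Longrightarrow> c \<le> n \<Longrightarrow> \<not> C a c \<Longrightarrow>
       2 \<le> c \<and> c + 1 \<le> n \<and> a + 1 \<le> m \<and> C a (c - 1) \<and> C a (c + 1) \<and> C (a + 1) c"
  proof -
    fix a c assume h: "1 \<le> a" "a \<le> m" "1 \<le> c" "c \<le> n" "\<not> C a c"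
    have "blocked m n (place C a c) a c" using rp h by (auto simp: resistant_predators_def inside_def)
    then show "2 \<le> c \<and> c + 1 \<le> n \<and> a + 1 \<le> m \<and> C a (c - 1) \<and> C a (c + 1) \<and> C (a + 1) c"
      by (auto simp: blocked_def place_def)
  qed
  have P2: "\<And>a c. 1 \<le> a \<Longrightarrow> a + 1 \<le> m \<Longrightarrow> 2 \<le> c \<Longrightarrow> c + 1 \<le> n \<Longrightarrow> C a c \<Longrightarrow>
       C a (c - 1) \<Longrightarrow> C a (c + 1) \<Longrightarrow> \<not> C (a + 1) c"
    using perm by (auto simp: blocked_def inside_def)
  have P3: "(3 \<le> c \<and> C a (c - 2) \<and> C (a + 1) (c - 1)) \<or>
       (c + 2 \<le> n \<and> C a (c + 2) \<and> C (a + 1) (c + 1)) \<or>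
       (2 \<le> a \<and> C (a - 1) (c - 1) \<and> C (a - 1) c \<and> C (a - 1) (c + 1))"
    if h: "1 \<le> a" "a \<le> m" "1 \<le> c" "c \<le> n" "\<not> C a c" for a c
  proof -
    obtain i' j' where ne: "(i', j') \<noteq> (a, c)" and ins: "inside m n i' j'" and occ: "C i' j'"
      and bl: "blocked m n (place C a c) i' j'"
      using ra h unfolding resistant_altruists_def by (meson inside_def)
    have blk: "2 \<le> j'" "j' + 1 \<le> n" "i' + 1 \<le> m" "place C a c i' (j' - 1)"
      "place C a c i' (j' + 1)" "place C a c (i' + 1) j'"
      using bl by (auto simp: blocked_def)
    consider (L) "a = i' \<and> c = j' - 1" | (R) "a = i' \<and> c = j' + 1" | (U) "a = i' + 1 \<and> c = j'"
      | (N) "\<not> (a = i' \<and> c = j' - 1) \<and> \<not> (a = i' \<and> c = j' + 1) \<and> \<not> (a = i' + 1 \<and> c = j')"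
      by blast
    then show ?thesis
    proof cases
      case L
      then have "c + 2 \<le> n \<and> C a (c + 2) \<and> C (a + 1) (c + 1)"
        using blk by (auto simp: place_def)
      then show ?thesis by blast
    next
      case R
      then have "3 \<le> c \<and> C a (c - 2) \<and> C (a + 1) (c - 1)"
        using blk by (auto simp: place_def)
      then show ?thesis by blast
    next
      case U
      then have "2 \<le> a \<and> C (a - 1) (c - 1) \<and> C (a - 1) c \<and> C (a - 1) (c + 1)"
        using blk occ ins by (auto simp: place_def inside_def)
      then show ?thesis by blast
    next
      case N
      then have "blocked m n C i' j'"
        using blk occ ins ne by (auto simp: place_def blocked_def split: if_splits)
      then show ?thesis using perm by blast
    qed
  qed
  show ?thesis unfolding good_def using P1 P2 P3 by blast
qed



lemma gZ:
  assumes "good m n C" "1 \<le> a" "a \<le> m" "1 \<le> c" "c \<le> n" "\<not> C a c"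
  shows "2 \<le> c" "c + 1 \<le> n" "a + 1 \<le> m" "C a (c - 1)" "C a (c + 1)" "C (a + 1) c"
  using assms unfolding good_def by blast+

lemma gP:
  assumes "good m n C" "1 \<le> a" "a + 1 \<le> m" "2 \<le> c" "c + 1 \<le> n" "C a c" "C a (c - 1)" "C a (c + 1)"
  shows "\<not> C (a + 1) c"
  using assms unfolding good_def by blast

lemma gA:
  assumes "good m n C" "1 \<le> a" "a \<le> m" "1 \<le> c" "c \<le> n" "\<not> C a c"
  shows "(3 \<le> c \<and> C a (c - 2) \<and> C (a + 1) (c - 1)) \<or>
       (c + 2 \<le> n \<and> C a (c + 2) \<and> C (a + 1) (c + 1)) \<or>
       (2 \<le> a \<and> C (a - 1) (c - 1) \<and> C (a - 1) c \<and> C (a - 1) (c + 1))"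
  using assms unfolding good_def by blast

lemma above:
  assumes "good m n C" "1 \<le> a" "a + 1 \<le> m" "1 \<le> c" "c \<le> n" "\<not> C (a + 1) c"
  shows "C a c"
  using gZ(6)[OF assms(1,2) _ assms(4,5)] assms by fastforce

lemma leftnb:
  assumes "good m n C" "1 \<le> a" "a \<le> m" "1 \<le> c" "c + 1 \<le> n" "\<not> C a (c + 1)"
  shows "C a c"
  using gZ(4)[OF assms(1,2,3) _ assms(5,6)] by simp

lemma rightnb:
  assumes "good m n C" "1 \<le> a" "a \<le> m" "1 \<le> c" "c \<le> n" "\<not> C a c"
  shows "C a (c + 1)"
  using gZ(5)[OF assms] .

lemma belownb:
  assumes "good m n C" "1 \<le> a" "a \<le> m" "1 \<le> c" "c \<le> n" "\<not> C a c"
  shows "C (a + 1) c"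
  using gZ(6)[OF assms] .

lemma border:
  assumes "good m n C" "1 \<le> a" "a \<le> m" "1 \<le> n"
  shows "C a n"
  using gZ(2)[OF assms(1,2,3,4)] by fastforce

lemma P2p:
  assumes "good m n C" "1 \<le> a" "a + 1 \<le> m" "1 \<le> d" "d + 2 \<le> n"
    "C a d" "C a (d + 1)" "C a (d + 2)"
  shows "\<not> C (a + 1) (d + 1)"
  using gP[OF assms(1,2,3), of "d+1"] assms by simp

lemma L1:
  assumes g: "good m n C" and "1 \<le> b" "b + 1 \<le> m" "1 \<le> c" "c + 2 \<le> n"
    "\<not> C (b + 1) c" "\<not> C (b + 1) (c + 2)"
  shows "\<not> C b (c + 1)"
proof
  assume h: "C b (c + 1)"
  have c2: "2 \<le> c" using gZ(1)[OF g _ _ _ _ assms(6)] assms by simp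
  have "C (b + 1) (c + 1)" using rightnb[OF g _ _ _ _ assms(6)] assms by simp
  moreover have "C b c"
    using above[OF g, of b c] assms by simp
  moreover have "C b (c + 2)"
    using above[OF g, of b "c+2"] assms by simp
  ultimately show False using P2p[OF g, of b c] assms h by simp
qed

lemma Vlem:
  assumes g: "good m n C" and "1 \<le> b" "b + 1 \<le> m" "1 \<le> e" "e + 2 \<le> n"
    "\<not> C (b + 1) e" "\<not> C (b + 1) (e + 2)"
  shows "\<not> C b (e + 1)" "2 \<le> b" "C (b - 1) e" "C (b - 1) (e + 1)" "C (b - 1) (e + 2)"
proof -
  show z: "\<not> C b (e + 1)" using L1[OF assms] .
  have "(3 \<le> e + 1 \<and> C b (e + 1 - 2) \<and> C (b + 1) (e + 1 - 1)) \<or>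
       (e + 1 + 2 \<le> n \<and> C b (e + 1 + 2) \<and> C (b + 1) (e + 1 + 1)) \<or>
       (2 \<le> b \<and> C (b - 1) (e + 1 - 1) \<and> C (b - 1) (e + 1) \<and> C (b - 1) (e + 1 + 1))"
    using gA[OF g, of b "e+1"] assms z by simp
  then have "2 \<le> b \<and> C (b - 1) e \<and> C (b - 1) (e + 1) \<and> C (b - 1) (e + 2)"
    using assms by simp
  then show "2 \<le> b" "C (b - 1) e" "C (b - 1) (e + 1)" "C (b - 1) (e + 2)" by auto
qed

lemma Vleft:
  assumes g: "good m n C" and "1 \<le> b" "b + 1 \<le> m" "2 \<le> f" "f + 3 \<le> n"
    "\<not> C (b + 1) (f + 1)" "\<not> C (b + 1) (f + 3)"
  shows "\<not> C b (f - 1)" "\<not> C (b - 1) f"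
proof -
  have e1: "f + 1 + 2 = f + 3" "f + 1 + 1 = f + 2" by simp_all
  have V: "\<not> C b (f + 2)" "2 \<le> b" "C (b - 1) (f + 1)" "C (b - 1) (f + 2)" "C (b - 1) (f + 3)"
    using Vlem[OF g, of b "f+1", unfolded e1] assms by auto
  have f2: "2 \<le> f + 1" using gZ(1)[OF g _ _ _ _ assms(6)] assms by simp
  have Cbf: "C b f"
  proof (rule ccontr)
    assume "\<not> C b f"
    then have "\<not> C (b - 1) (f + 1)" using L1[OF g, of "b-1" f] V assms by simp
    then show False using V by simp
  qed
  have Cb1: "C b (f + 1)" using above[OF g, of b "f+1"] assms by simp
  have Cb1b: "C (b + 1) f" using leftnb[OF g, of "b+1" f] assms gZ(3)[OF g _ _ _ _ assms(6)] by simp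
  show "\<not> C b (f - 1)"
  proof
    assume h: "C b (f - 1)"
    have "\<not> C (b + 1) f" using P2p[OF g, of b "f-1"] assms f2 h Cbf Cb1 by simp
    then show False using Cb1b by simp
  qed
  show "\<not> C (b - 1) f"
  proof
    assume h: "C (b - 1) f"
    have "\<not> C (b - 1 + 1) (f + 1)" using P2p[OF g, of "b-1" f] assms V h by simp
    then show False using V Cb1 by simp
  qed
qed



definition pat :: "(nat \<Rightarrow> bool) \<Rightarrow> nat \<Rightarrow> nat \<Rightarrow> bool" where
  "pat f lo hi \<longleftrightarrow> (\<forall>x. lo \<le> x \<longrightarrow> x \<le> hi \<longrightarrow> (f x \<longleftrightarrow> (x - lo) mod 3 \<noteq> 0))"

lemma pat_zero: "pat f lo hi \<Longrightarrow> lo + 3 * s \<le> hi \<Longrightarrow> \<not> f (lo + 3 * s)"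
  unfolding pat_def by (drule spec[of _ "lo + 3 * s"]) simp

lemma pat_one: "pat f lo hi \<Longrightarrow> lo + 3 * s + 1 \<le> hi \<Longrightarrow> f (lo + 3 * s + 1)"
  unfolding pat_def by (drule spec[of _ "lo + 3 * s + 1"]) (simp add: mod_Suc)

lemma pat_two: "pat f lo hi \<Longrightarrow> lo + 3 * s + 2 \<le> hi \<Longrightarrow> f (lo + 3 * s + 2)"
  unfolding pat_def by (drule spec[of _ "lo + 3 * s + 2"]) (simp add: mod_Suc)
lemma pat_intro:
  assumes "\<And>s. lo + 3 * s \<le> hi \<Longrightarrow> \<not> f (lo + 3 * s)"
    "\<And>s. lo + 3 * s + 1 \<le> hi \<Longrightarrow> f (lo + 3 * s + 1)"
    "\<And>s. lo + 3 * s + 2 \<le> hi \<Longrightarrow> f (lo + 3 * s + 2)"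
  shows "pat f lo hi"
  unfolding pat_def
proof (intro allI impI)
  fix x assume h: "lo \<le> x" "x \<le> hi"
  define s where "s = (x - lo) div 3"
  define r where "r = (x - lo) mod 3"
  have x: "x = lo + 3 * s + r" using h unfolding s_def r_def by simp
  have r3: "r < 3" unfolding r_def by simp
  have xm: "(x - lo) mod 3 = r" unfolding r_def ..
  have hx: "lo + 3 * s + r \<le> hi" using h x by simp
  consider "r = 0" | "r = 1" | "r = 2" using r3 by linarith
  then show "f x \<longleftrightarrow> (x - lo) mod 3 \<noteq> 0"
  proof cases
    case 1 then show ?thesis using assms(1)[of s] hx xm by (simp add: x)
  next
    case 2 then show ?thesis using assms(2)[of s] hx xm by (simp add: x)
  next
    case 3 then show ?thesis using assms(3)[of s] hx xm by (simp add: x)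
  qed
qed

lemma mod3_sum: "(u::nat) + v = 3 * T \<Longrightarrow> (u mod 3 = 0 \<longleftrightarrow> v mod 3 = 0)"
  by presburger

lemma pat_sub:
  assumes "pat f lo hi" "lo' = lo + 3 * k" "hi' \<le> hi"
  shows "pat f lo' hi'"
  unfolding pat_def
proof (intro allI impI)
  fix x assume h: "lo' \<le> x" "x \<le> hi'"
  have e: "x - lo = (x - lo') + 3 * k" using h assms(2) by simp
  have "(x - lo) mod 3 = (x - lo') mod 3" unfolding e by simp
  moreover have "f x \<longleftrightarrow> (x - lo) mod 3 \<noteq> 0" using assms(1,2,3) h unfolding pat_def by simp
  ultimately show "f x = ((x - lo') mod 3 \<noteq> 0)" by simp
qed

lemma pat_reflect:
  assumes "pat f lo hi" "hi = lo + 3 * T" "1 \<le> lo" "hi \<le> n"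
  shows "pat (\<lambda>x. f (n + 1 - x)) (n + 1 - hi) (n + 1 - lo)"
  unfolding pat_def
proof (intro allI impI)
  fix x assume h: "n + 1 - hi \<le> x" "x \<le> n + 1 - lo"
  have y: "lo \<le> n + 1 - x" "n + 1 - x \<le> hi" using h assms(3,4) by linarith+
  have fy: "f (n + 1 - x) \<longleftrightarrow> (n + 1 - x - lo) mod 3 \<noteq> 0" using assms(1) y unfolding pat_def by blast
  have sum: "(x - (n + 1 - hi)) + (n + 1 - x - lo) = 3 * T" using h assms(2,3,4) by linarith
  have "(x - (n + 1 - hi)) mod 3 = 0 \<longleftrightarrow> (n + 1 - x - lo) mod 3 = 0" using mod3_sum[OF sum] .
  then show "f (n + 1 - x) \<longleftrightarrow> (x - (n + 1 - hi)) mod 3 \<noteq> 0" using fy by simp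
qed

lemma good_reflect:
  assumes g: "good m n C" shows "good m n (reflect n C)"
proof -
  let ?D = "reflect n C"
  have D: "\<And>a c. ?D a c = C a (n + 1 - c)" by (simp add: reflect_def)
  have P1: "2 \<le> c \<and> c + 1 \<le> n \<and> a + 1 \<le> m \<and> ?D a (c - 1) \<and> ?D a (c + 1) \<and> ?D (a + 1) c"
    if h: "1 \<le> a" "a \<le> m" "1 \<le> c" "c \<le> n" "\<not> ?D a c" for a c
  proof -
    let ?c = "n + 1 - c"
    have z: "\<not> C a ?c" using h D by simp
    have r: "1 \<le> ?c" "?c \<le> n" using h by auto
    note G = gZ[OF g h(1,2) r z]
    have e1: "n + 1 - (c - 1) = ?c + 1" "n + 1 - (c + 1) = ?c - 1" using h G by auto
    show ?thesis using G h unfolding D e1 by auto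
  qed
  have P2: "\<not> ?D (a + 1) c"
    if h: "1 \<le> a" "a + 1 \<le> m" "2 \<le> c" "c + 1 \<le> n" "?D a c" "?D a (c - 1)" "?D a (c + 1)" for a c
  proof -
    let ?c = "n + 1 - c"
    have e1: "n + 1 - (c - 1) = ?c + 1" "n + 1 - (c + 1) = ?c - 1" using h by auto
    have "\<not> C (a + 1) ?c" using gP[OF g h(1,2), of ?c] h unfolding D e1 by auto
    then show ?thesis using D by simp
  qed
  have P3: "(3 \<le> c \<and> ?D a (c - 2) \<and> ?D (a + 1) (c - 1)) \<or>
       (c + 2 \<le> n \<and> ?D a (c + 2) \<and> ?D (a + 1) (c + 1)) \<or>
       (2 \<le> a \<and> ?D (a - 1) (c - 1) \<and> ?D (a - 1) c \<and> ?D (a - 1) (c + 1))"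
    if h: "1 \<le> a" "a \<le> m" "1 \<le> c" "c \<le> n" "\<not> ?D a c" for a c
  proof -
    let ?c = "n + 1 - c"
    have z: "\<not> C a ?c" using h D by simp
    have r: "1 \<le> ?c" "?c \<le> n" using h by auto
    note G = gA[OF g h(1,2) r z]
    have e1: "n + 1 - (c - 1) = ?c + 1" "n + 1 - (c + 1) = ?c - 1" using h gZ[OF g h(1,2) r z] by auto
    have e2: "c + 2 \<le> n \<Longrightarrow> n + 1 - (c + 2) = ?c - 2" "3 \<le> ?c \<Longrightarrow> c + 2 \<le> n"
      "3 \<le> c \<Longrightarrow> n + 1 - (c - 2) = ?c + 2" "?c + 2 \<le> n \<Longrightarrow> 3 \<le> c" using h by auto
    from G show ?thesis
    proof (elim disjE)
      assume A: "3 \<le> ?c \<and> C a (?c - 2) \<and> C (a + 1) (?c - 1)"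
      have "c + 2 \<le> n" using A h by linarith
      moreover have "n + 1 - (c + 2) = ?c - 2" using A h by linarith
      ultimately have "c + 2 \<le> n \<and> ?D a (c + 2) \<and> ?D (a + 1) (c + 1)" using A unfolding D e1 by simp
      then show ?thesis by blast
    next
      assume B: "?c + 2 \<le> n \<and> C a (?c + 2) \<and> C (a + 1) (?c + 1)"
      have "3 \<le> c" using B h by linarith
      moreover have "n + 1 - (c - 2) = ?c + 2" using B h by linarith
      ultimately have "3 \<le> c \<and> ?D a (c - 2) \<and> ?D (a + 1) (c - 1)" using B unfolding D e1 by simp
      then show ?thesis by blast
    next
      assume U: "2 \<le> a \<and> C (a - 1) (?c - 1) \<and> C (a - 1) ?c \<and> C (a - 1) (?c + 1)"
      have "2 \<le> a \<and> ?D (a - 1) (c - 1) \<and> ?D (a - 1) c \<and> ?D (a - 1) (c + 1)" using U unfolding D e1 by simp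
      then show ?thesis by blast
    qed
  qed
  show ?thesis unfolding good_def using P1 P2 P3 by blast
qed




definition BL :: "nat \<Rightarrow> nat \<Rightarrow> nat \<Rightarrow> bool" where
  "BL m n T \<longleftrightarrow> (\<forall>C b p. good m n C \<longrightarrow> 1 \<le> b \<longrightarrow> b + 1 \<le> m \<longrightarrow> 1 \<le> p \<longrightarrow>
     p + 3 * T + 3 \<le> n \<longrightarrow> \<not> C (b + 1) (p + 1) \<longrightarrow> \<not> C (b + 1) (p + 3 * T + 3) \<longrightarrow>
     pat (C (b + 2)) (p + 2) (p + 3 * T + 2) \<longrightarrow> (\<not> C b p \<or> C b (p + 2)) \<longrightarrow> False)"

lemma BL_BR:
  assumes bl: "BL m n T" and g: "good m n C" and h: "1 \<le> b" "b + 1 \<le> m" "1 \<le> p"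
    "p + 3 * T + 3 \<le> n" "\<not> C (b + 1) (p + 1)" "\<not> C (b + 1) (p + 3 * T + 3)"
    "pat (C (b + 2)) (p + 2) (p + 3 * T + 2)" "\<not> C b (p + 3 * T + 4)"
  shows False
proof -
  let ?D = "reflect n C"
  have D: "\<And>a c. ?D a c = C a (n + 1 - c)" by (simp add: reflect_def)
  have gD: "good m n ?D" using good_reflect[OF g] .
  have q: "p + 3 * T + 4 \<le> n" using gZ(2)[OF g _ _ _ _ h(6)] h by simp
  define p' where "p' = n - (p + 3 * T + 3)"
  have p'1: "1 \<le> p'" using q unfolding p'_def by simp
  have e1: "n + 1 - (p' + 1) = p + 3 * T + 3" using q unfolding p'_def by simp
  have e2: "n + 1 - (p' + 3 * T + 3) = p + 1" using q unfolding p'_def by simp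
  have e3: "n + 1 - p' = p + 3 * T + 4" using q unfolding p'_def by simp
  have e4: "n + 1 - (p + 3 * T + 2) = p' + 2" "n + 1 - (p + 2) = p' + 3 * T + 2"
    using q unfolding p'_def by simp_all
  have pr: "pat (\<lambda>x. C (b + 2) (n + 1 - x)) (n + 1 - (p + 3 * T + 2)) (n + 1 - (p + 2))"
    using pat_reflect[OF h(7), of T n] q by simp
  have pD: "pat (?D (b + 2)) (p' + 2) (p' + 3 * T + 2)"
    using pr unfolding e4 by (simp add: reflect_def)
  have inst: "good m n ?D \<longrightarrow> 1 \<le> b \<longrightarrow> b + 1 \<le> m \<longrightarrow> 1 \<le> p' \<longrightarrow>
     p' + 3 * T + 3 \<le> n \<longrightarrow> \<not> ?D (b + 1) (p' + 1) \<longrightarrow> \<not> ?D (b + 1) (p' + 3 * T + 3) \<longrightarrow>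
     pat (?D (b + 2)) (p' + 2) (p' + 3 * T + 2) \<longrightarrow> (\<not> ?D b p' \<or> ?D b (p' + 2)) \<longrightarrow> False"
    using bl unfolding BL_def by blast
  have f1: "p' + 3 * T + 3 \<le> n" using q unfolding p'_def by simp
  have f2: "\<not> ?D (b + 1) (p' + 1)" unfolding D e1 using h(6) .
  have f3: "\<not> ?D (b + 1) (p' + 3 * T + 3)" unfolding D e2 using h(5) .
  have f4: "\<not> ?D b p'" unfolding D e3 using h(8) .
  show False using inst gD h(1,2) p'1 f1 f2 f3 pD f4 by blast
qed




lemma BL_all: "BL m n T"
proof (induction T rule: less_induct)
  case (less T)
  have IH: "\<And>T'. T' < T \<Longrightarrow> BL m n T'" using less by blast
  show "BL m n T" unfolding BL_def
  proof (intro allI impI)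
    fix C b p
    assume g: "good m n C" and hb: "1 \<le> b" "b + 1 \<le> m" and hp: "1 \<le> p"
      and hn: "p + 3 * T + 3 \<le> n"
      and z1: "\<not> C (b + 1) (p + 1)" and zq: "\<not> C (b + 1) (p + 3 * T + 3)"
      and pt: "pat (C (b + 2)) (p + 2) (p + 3 * T + 2)"
      and guard: "\<not> C b p \<or> C b (p + 2)"
    have m2: "b + 2 \<le> m" using gZ(3)[OF g _ _ _ _ z1] hb hp hn by simp
    have ex: "\<exists>t. t \<le> T \<and> \<not> C (b + 1) (p + 3 + 3 * t)"
    proof -
      have eqq: "p + 3 * T + 3 = p + 3 + 3 * T" by simp
      have "\<not> C (b + 1) (p + 3 + 3 * T)" using zq unfolding eqq .
      then show ?thesis by blast
    qed
    then obtain t where t: "t \<le> T" "\<not> C (b + 1) (p + 3 + 3 * t)"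
      and tmin: "\<forall>s<t. \<not> (s \<le> T \<and> \<not> C (b + 1) (p + 3 + 3 * s))"
      using exists_least_iff[of "\<lambda>t. t \<le> T \<and> \<not> C (b + 1) (p + 3 + 3 * t)"] by blast
    have lt: "\<And>s. s < t \<Longrightarrow> C (b + 1) (p + 3 + 3 * s)" using tmin t by auto
    have z2: "\<And>s. s < T \<Longrightarrow> \<not> C (b + 2) (p + 2 + 3 * s)"
      using pat_zero[OF pt] by simp
    have c1: "\<And>s. s < T \<Longrightarrow> C (b + 2) (p + 2 + 3 * s + 1)"
      using pat_one[OF pt] by simp
    have c0: "\<And>s. s < T \<Longrightarrow> C (b + 1) (p + 2 + 3 * s)"
    proof -
      fix s assume st: "s < T"
      show "C (b + 1) (p + 2 + 3 * s)"
        using above[OF g, of "b + 1" "p + 2 + 3 * s"] z2[OF st] hb m2 hn st by simp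
    qed
    have zR: "\<And>s. s < t \<Longrightarrow> \<not> C (b + 1) (p + 4 + 3 * s)"
    proof
      fix s assume s: "s < t" and c2: "C (b + 1) (p + 4 + 3 * s)"
      have st: "s < T" using s t by simp
      have e: "p + 2 + 3 * s + 1 = p + 3 + 3 * s" "p + 2 + 3 * s + 2 = p + 4 + 3 * s" by simp_all
      have "\<not> C (b + 1 + 1) (p + 2 + 3 * s + 1)"
        using P2p[OF g, of "b + 1" "p + 2 + 3 * s"] hb m2 hn st c0[OF st] lt[OF s] c2
        unfolding e by simp
      then show False using c1[OF st] by simp
    qed
    have zl: "\<not> C (b + 1) (p + 1 + 3 * t)"
    proof (cases t)
      case 0 then show ?thesis using z1 by simp
    next
      case (Suc u)
      have eq: "p + 4 + 3 * u = p + 1 + 3 * t" using Suc by simp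
      have "\<not> C (b + 1) (p + 4 + 3 * u)" using zR[of u] Suc by simp
      then show ?thesis unfolding eq .
    qed
    have ins: "p + 1 + 3 * t + 2 \<le> n" using t hn by simp
    have e3: "p + 1 + 3 * t + 2 = p + 3 + 3 * t" by simp
    have V: "\<not> C b (p + 1 + 3 * t + 1)" "2 \<le> b" "C (b - 1) (p + 1 + 3 * t)"
      using Vlem[OF g hb, of "p + 1 + 3 * t"] zl t(2) ins unfolding e3 by simp_all
    have bb: "b - 1 + 1 = b" "b - 1 + 2 = b + 1" "1 \<le> b - 1" using V(2) by simp_all
    show False
    proof (cases t)
      case 0
      from guard show False
      proof
        assume gz: "\<not> C b p"
        have "\<not> C (b - 1) (p + 1)"
          using L1[OF g, of "b - 1" p] bb hb hp hn gz V(1) 0 by simp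
        then show False using V(3) 0 by simp
      next
        assume "C b (p + 2)"
        then show False using V(1) 0 by simp
      qed
    next
      case (Suc u)
      define f where "f = p + 3 + 3 * u"
      have ef: "f + 1 = p + 1 + 3 * t" "f + 3 = p + 3 + 3 * t" "f - 1 = p + 2 + 3 * u"
        unfolding f_def using Suc by simp_all
      have zf1: "\<not> C (b + 1) (f + 1)" unfolding ef(1) by (rule zl)
      have zf3: "\<not> C (b + 1) (f + 3)" unfolding ef(2) by (rule t(2))
      have fin: "f + 3 \<le> n" unfolding ef(2) using ins unfolding e3 .
      have f2: "2 \<le> f" unfolding f_def by simp
      have fm: "f - 1 \<le> n" using fin by simp
      have VL: "\<not> C b (f - 1)" "\<not> C (b - 1) f" using Vleft[OF g hb f2 fin zf1 zf3] by simp_all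
      have pa: "pat (C (b + 1)) (p + 1) (p + 1 + 3 * u)"
      proof (rule pat_intro)
        fix s assume s: "p + 1 + 3 * s \<le> p + 1 + 3 * u"
        show "\<not> C (b + 1) (p + 1 + 3 * s)"
        proof (cases s)
          case 0 then show ?thesis using z1 by simp
        next
          case (Suc s')
          have st: "s' < t" using s Suc \<open>t = Suc u\<close> by simp
          have eq: "p + 1 + 3 * s = p + 4 + 3 * s'" using Suc by simp
          show ?thesis unfolding eq using zR[OF st] .
        qed
      next
        fix s assume s: "p + 1 + 3 * s + 1 \<le> p + 1 + 3 * u"
        have "s < T" using s t Suc by simp
        have eq: "p + 1 + 3 * s + 1 = p + 2 + 3 * s" by simp
        then show "C (b + 1) (p + 1 + 3 * s + 1)" unfolding eq using c0 \<open>s < T\<close> by blast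
      next
        fix s assume s: "p + 1 + 3 * s + 2 \<le> p + 1 + 3 * u"
        have "s < t" using s Suc by simp
        have eq: "p + 1 + 3 * s + 2 = p + 3 + 3 * s" by simp
        then show "C (b + 1) (p + 1 + 3 * s + 2)" unfolding eq using lt \<open>s < t\<close> by blast
      qed
      have ut: "u < T" using Suc t by simp
      from guard show False
      proof
        assume gz: "\<not> C b p"
        have p2: "2 \<le> p" using gZ(1)[OF g _ _ _ _ gz] hb hp hn by simp
        have pp: "p - 1 + 1 = p" "p - 1 + 3 * u + 3 = f - 1" "p - 1 + 2 = p + 1"
          "p - 1 + 3 * u + 2 = p + 1 + 3 * u" "p - 1 + 3 * u + 4 = f" "1 \<le> p - 1"
          using p2 unfolding f_def by simp_all
        note X = BL_BR[OF IH[OF ut] g, of "b - 1" "p - 1", unfolded bb pp]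
        show False
          using X hb fin fm gz VL pa bb pp by simp
      next
        assume gc: "C b (p + 2)"
        show False
        proof (cases u)
          case 0 then show False using VL(1) gc unfolding f_def by simp
        next
          case (Suc w)
          have Cb1: "C b (p + 1)" using above[OF g, of b "p + 1"] z1 hb hp hn by simp
          have Cb1r: "C (b + 1) (p + 2)" using rightnb[OF g, of "b + 1" "p + 1"] z1 hb hp hn by simp
          have z3: "\<not> C b (p + 3)"
          proof
            assume c3: "C b (p + 3)"
            have e: "p + 1 + 1 = p + 2" "p + 1 + 2 = p + 3" by simp_all
            have "\<not> C (b + 1) (p + 1 + 1)" using P2p[OF g, of b "p + 1", unfolded e] hb hp hn Cb1 gc c3 by simp
            then show False using Cb1r by simp
          qed
          have wT: "w < T" using Suc ut by simp
          have pa2: "pat (C (b + 1)) (p + 2 + 2) (p + 2 + 3 * w + 2)"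
            using pat_sub[OF pa, of "p + 2 + 2" 1 "p + 2 + 3 * w + 2"] Suc by simp
          have qq: "p + 2 + 1 = p + 3" "p + 2 + 3 * w + 3 = f - 1" "p + 2 + 3 * w + 4 = f"
            using Suc unfolding f_def by simp_all
          note X = BL_BR[OF IH[OF wT] g, of "b - 1" "p + 2", unfolded bb qq]
          show False
            using X hb fin fm z3 VL pa2 bb qq by simp
        qed
      qed
    qed
  qed
qed




lemma bracket:
  assumes "good m n C" "1 \<le> b" "b + 1 \<le> m" "1 \<le> p" "p + 3 * T + 3 \<le> n"
    "\<not> C (b + 1) (p + 1)" "\<not> C (b + 1) (p + 3 * T + 3)"
    "pat (C (b + 2)) (p + 2) (p + 3 * T + 2)" "\<not> C b p \<or> C b (p + 2)"
  shows False
  using BL_all[of m n T] assms unfolding BL_def by blast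

lemma pat_ext:
  assumes "pat f lo hi" "hi = lo + 3 * k" "hi + 1 \<le> hi' \<Longrightarrow> f (hi + 1)"
    "hi + 2 \<le> hi' \<Longrightarrow> f (hi + 2)" "hi + 3 \<le> hi' \<Longrightarrow> \<not> f (hi + 3)" "hi' \<le> hi + 3"
  shows "pat f lo hi'"
  unfolding pat_def
proof (intro allI impI)
  fix x assume h: "lo \<le> x" "x \<le> hi'"
  show "f x \<longleftrightarrow> (x - lo) mod 3 \<noteq> 0"
  proof (cases "x \<le> hi")
    case True then show ?thesis using assms(1) h unfolding pat_def by blast
  next
    case False
    then consider "x = hi + 1" | "x = hi + 2" | "x = hi + 3" using h assms(6) by linarith
    then show ?thesis
    proof cases
      case 1
      have e: "x - lo = 3 * k + 1" using 1 assms(2) by simp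
      have "(3 * k + 1) mod 3 = (1::nat)" by presburger
      then have "(x - lo) mod 3 = 1" unfolding e .
      then show ?thesis using assms(3) 1 h by simp
    next
      case 2
      have e: "x - lo = 3 * k + 2" using 2 assms(2) by simp
      have "(3 * k + 2) mod 3 = (2::nat)" by presburger
      then have "(x - lo) mod 3 = 2" unfolding e .
      then show ?thesis using assms(4) 2 h by simp
    next
      case 3
      have "x - lo = 3 * (k + 1)" using 3 assms(2) by simp
      then have "(x - lo) mod 3 = 0" by simp
      then show ?thesis using assms(5) 3 h by simp
    qed
  qed
qed

lemma IVcore:
  assumes g: "good m n C" and hb: "1 \<le> b" "b + 2 \<le> m" and hp: "1 \<le> p" "p + 2 \<le> n"
    and z0: "\<not> C b p" and z1: "\<not> C (b + 1) (p + 1)" and pt: "pat (C (b + 2)) (p + 2) n"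
  shows False
proof -
  define K where "K = (n - (p + 2)) div 3"
  define r where "r = (n - (p + 2)) mod 3"
  have nK: "n = p + 2 + 3 * K + r" unfolding K_def r_def using hp by simp
  have r3: "r < 3" unfolding r_def by simp
  have bor: "\<And>a. 1 \<le> a \<Longrightarrow> a \<le> m \<Longrightarrow> C a n" using border[OF g] hp by simp
  consider "r = 0" | "r = 1" | "r = 2" using r3 by linarith
  then show False
  proof cases
    case 1
    have "\<not> C (b + 2) (p + 2 + 3 * K)" using pat_zero[OF pt, of K] nK 1 by simp
    then show False using bor[of "b + 2"] hb nK 1 by simp
  next
    case 3
    have n4: "n = p + 3 * K + 4" using nK 3 by simp
    have zK: "\<not> C (b + 2) (p + 2 + 3 * K)" using pat_zero[OF pt, of K] n4 by simp
    have cK: "C (b + 2) (p + 2 + 3 * K + 1)" using pat_one[OF pt, of K] n4 by simp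
    have a1: "C (b + 1) (p + 2 + 3 * K)" using above[OF g, of "b + 1" "p + 2 + 3 * K"] zK hb n4 by simp
    have e3: "p + 2 + 3 * K + 2 = n" using n4 by simp
    have a3: "C (b + 1) (p + 2 + 3 * K + 2)" unfolding e3 using bor[of "b + 1"] hb by simp
    have zL: "\<not> C (b + 1) (p + 2 + 3 * K + 1)"
    proof
      assume a2: "C (b + 1) (p + 2 + 3 * K + 1)"
      have "\<not> C (b + 1 + 1) (p + 2 + 3 * K + 1)"
        using P2p[OF g, of "b + 1" "p + 2 + 3 * K"] a1 a2 a3 hb n4 by simp
      then show False using cK by simp
    qed
    have e: "p + 2 + 3 * K + 1 = p + 3 * K + 3" by simp
    have pt2: "pat (C (b + 2)) (p + 2) (p + 3 * K + 2)" using pat_sub[OF pt, of "p + 2" 0] n4 by simp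
    show False using bracket[OF g hb(1) _ hp(1) _ z1 zL[unfolded e] pt2] z0 hb n4 by simp
  next
    case 2
    have n3: "n = p + 3 * K + 3" using nK 2 by simp
    show False
    proof (cases "\<exists>t<K. \<not> C (b + 1) (p + 3 + 3 * t)")
      case True
      then obtain t where t: "t < K" "\<not> C (b + 1) (p + 3 + 3 * t)" by blast
      have e: "p + 3 + 3 * t = p + 3 * t + 3" by simp
      have pt2: "pat (C (b + 2)) (p + 2) (p + 3 * t + 2)" using pat_sub[OF pt, of "p + 2" 0] n3 t by simp
      show False using bracket[OF g hb(1) _ hp(1) _ z1 t(2)[unfolded e] pt2] z0 hb n3 t by simp
    next
      case False
      then have allR: "\<And>t. t < K \<Longrightarrow> C (b + 1) (p + 3 + 3 * t)" by blast
      have zb2: "\<And>s. s \<le> K \<Longrightarrow> \<not> C (b + 2) (p + 2 + 3 * s)"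
        using pat_zero[OF pt] n3 by simp
      have ab: "\<And>s. s \<le> K \<Longrightarrow> C (b + 1) (p + 2 + 3 * s)"
      proof -
        fix s assume s: "s \<le> K"
        show "C (b + 1) (p + 2 + 3 * s)" using above[OF g, of "b + 1" "p + 2 + 3 * s"] zb2[OF s] hb n3 s by simp
      qed
      have zrow: "\<And>s. s \<le> K \<Longrightarrow> \<not> C (b + 1) (p + 1 + 3 * s)"
      proof -
        fix s assume s: "s \<le> K"
        show "\<not> C (b + 1) (p + 1 + 3 * s)"
        proof (cases s)
          case 0 then show ?thesis using z1 by simp
        next
          case (Suc s')
          have s': "s' < K" using s Suc by simp
          have eq: "p + 1 + 3 * s = p + 2 + 3 * s' + 2" "p + 2 + 3 * s' + 1 = p + 3 + 3 * s'" using Suc by simp_all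
          have c1: "C (b + 2) (p + 3 + 3 * s')" using pat_one[OF pt, of s', unfolded eq(2)] n3 s' by simp
          show ?thesis unfolding eq(1)
          proof
            assume a2: "C (b + 1) (p + 2 + 3 * s' + 2)"
            have bb2: "b + 1 + 1 = b + 2" by simp
            have "\<not> C (b + 2) (p + 3 + 3 * s')"
              using P2p[OF g, of "b + 1" "p + 2 + 3 * s'", unfolded eq(2) bb2] ab[of s'] allR[OF s'] a2 hb n3 s'
              by simp
            then show False using c1 by simp
          qed
        qed
      qed
      have prow: "pat (C (b + 1)) (p + 1) (p + 1 + 3 * K)"
      proof (rule pat_intro)
        fix s assume "p + 1 + 3 * s \<le> p + 1 + 3 * K"
        then show "\<not> C (b + 1) (p + 1 + 3 * s)" using zrow by simp
      next
        fix s assume "p + 1 + 3 * s + 1 \<le> p + 1 + 3 * K"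
        then have s: "s \<le> K" by simp
        have eq: "p + 1 + 3 * s + 1 = p + 2 + 3 * s" by simp
        show "C (b + 1) (p + 1 + 3 * s + 1)" unfolding eq using ab[OF s] .
      next
        fix s assume "p + 1 + 3 * s + 2 \<le> p + 1 + 3 * K"
        then have s: "s < K" by simp
        have eq: "p + 1 + 3 * s + 2 = p + 3 + 3 * s" by simp
        show "C (b + 1) (p + 1 + 3 * s + 2)" unfolding eq using allR[OF s] .
      qed
      have zKr: "\<not> C (b + 1) (p + 1 + 3 * K)" using zrow by simp
      have zb: "\<not> C b (n - 1)"
      proof
        assume a2: "C b (n - 1)"
        have en: "p + 1 + 3 * K = n - 2" "n - 2 + 1 = n - 1" "n - 2 + 2 = n" "p + 1 + 3 * K + 1 = n - 1"
          using n3 by simp_all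
        have zK2: "\<not> C (b + 1) (n - 2)" using zKr unfolding en(1) .
        have a1: "C b (n - 2)" using above[OF g, of b "n - 2"] zK2 hb n3 by simp
        have a3: "C b n" using bor[of b] hb by simp
        have "\<not> C (b + 1) (n - 1)" using P2p[OF g, of b "n - 2", unfolded en(2,3)] a1 a2 a3 hb n3 by simp
        moreover have "C (b + 1) (n - 1)" using rightnb[OF g, of "b + 1" "p + 1 + 3 * K", unfolded en(4)] zKr hb n3 by simp
        ultimately show False by simp
      qed
      have alt: "(3 \<le> n - 1 \<and> C b (n - 1 - 2) \<and> C (b + 1) (n - 1 - 1)) \<or>
         (n - 1 + 2 \<le> n \<and> C b (n - 1 + 2) \<and> C (b + 1) (n - 1 + 1)) \<or>
         (2 \<le> b \<and> C (b - 1) (n - 1 - 1) \<and> C (b - 1) (n - 1) \<and> C (b - 1) (n - 1 + 1))"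
        using gA[OF g, of b "n - 1"] zb hb n3 by simp
      have "n - 1 - 1 = p + 1 + 3 * K" using n3 by simp
      then have Cc: "2 \<le> b \<and> C (b - 1) (n - 2)" using alt zKr n3 by auto
      let ?D = "reflect n C"
      have gD: "good m n ?D" using good_reflect[OF g] .
      have D: "\<And>a c. ?D a c = C a (n + 1 - c)" by (simp add: reflect_def)
      have b2: "2 \<le> b" using Cc by simp
      have bb: "b - 1 + 1 = b" "b - 1 + 2 = b + 1" "1 \<le> b - 1" using b2 by simp_all
      have d1: "\<not> ?D (b - 1 + 1) (1 + 1)" unfolding D bb using zb by (simp add: n3)
      have d2: "\<not> ?D (b - 1 + 1) (1 + 3 * K + 3)" unfolding D bb using z0 by (simp add: n3)
      have pr: "pat (\<lambda>x. C (b + 1) (n + 1 - x)) (n + 1 - (p + 1 + 3 * K)) (n + 1 - (p + 1))"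
        using pat_reflect[OF prow, of K n] hp n3 by simp
      have e4: "n + 1 - (p + 1 + 3 * K) = 1 + 2" "n + 1 - (p + 1) = 1 + 3 * K + 2" using n3 by simp_all
      have d3: "pat (?D (b - 1 + 2)) (1 + 2) (1 + 3 * K + 2)"
        using pr unfolding e4 bb by (simp add: reflect_def)
      have d4: "?D (b - 1) (1 + 2)" unfolding D using Cc n3 by (simp add: numeral_eq_Suc)
      show False using bracket[OF gD bb(3) _ _ _ d1 d2 d3] d4 hb hp n3 by simp
    qed
  qed
qed




lemma IIIcore:
  assumes g: "good m n C" and hb: "1 \<le> b" "b + 3 \<le> m" and hp: "1 \<le> p" "p + 2 \<le> n"
    and z0: "\<not> C b p" and z1: "\<not> C (b + 1) (p + 1)" and z2: "\<not> C (b + 2) (p + 2)"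
    and full: "\<And>x. p + 2 \<le> x \<Longrightarrow> x \<le> n \<Longrightarrow> C (b + 3) x"
  shows False
proof -
  have bor: "\<And>a. 1 \<le> a \<Longrightarrow> a \<le> m \<Longrightarrow> C a n" using border[OF g] hp by simp
  have step: "C (b + 2) (p + 2 + 3 * k + 1) \<and> (p + 2 + 3 * k + 2 \<le> n \<longrightarrow> C (b + 2) (p + 2 + 3 * k + 2))
      \<and> (p + 2 + 3 * k + 3 \<le> n \<longrightarrow> \<not> C (b + 2) (p + 2 + 3 * k + 3))"
    if k: "p + 2 + 3 * k \<le> n - 1" and pk: "pat (C (b + 2)) (p + 2) (p + 2 + 3 * k)" for k
  proof -
    define y where "y = p + 2 + 3 * k"
    have zy: "\<not> C (b + 2) y" using pat_zero[OF pk, of k] unfolding y_def by simp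
    have yn: "y + 1 \<le> n" using k unfolding y_def by simp
    have c1: "C (b + 2) (y + 1)" using rightnb[OF g, of "b + 2" y] zy hb yn unfolding y_def by simp
    have c2: "y + 2 \<le> n \<longrightarrow> C (b + 2) (y + 2)"
    proof
      assume y2: "y + 2 \<le> n"
      show "C (b + 2) (y + 2)"
      proof (cases "y + 2 = n")
        case True then show ?thesis using bor[of "b + 2"] hb by simp
      next
        case False
        show ?thesis
        proof (rule ccontr)
          assume nz: "\<not> C (b + 2) (y + 2)"
          have bb: "b + 1 + 1 = b + 2" by simp
          have zz: "\<not> C (b + 1) (y + 1)"
            using L1[OF g, of "b + 1" y, unfolded bb] zy nz hb y2 unfolding y_def by simp
          have e: "y + 1 = p + 3 * k + 3" "p + 2 + 3 * k = p + 3 * k + 2" unfolding y_def by simp_all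
          have pk2: "pat (C (b + 2)) (p + 2) (p + 3 * k + 2)" using pk unfolding e(2) .
          show False using bracket[OF g hb(1) _ hp(1) _ z1 zz[unfolded e(1)] pk2] z0 hb y2 e by simp
        qed
      qed
    qed
    have c3: "y + 3 \<le> n \<longrightarrow> \<not> C (b + 2) (y + 3)"
    proof (intro impI notI)
      assume y3: "y + 3 \<le> n" and c: "C (b + 2) (y + 3)"
      have cc2: "C (b + 2) (y + 2)" using c2 y3 by simp
      have e: "y + 1 + 1 = y + 2" "y + 1 + 2 = y + 3" "b + 2 + 1 = b + 3" by simp_all
      have "\<not> C (b + 3) (y + 2)" using P2p[OF g, of "b + 2" "y + 1", unfolded e] c1 cc2 c hb y3 by simp
      then show False using full[of "y + 2"] y3 unfolding y_def by simp
    qed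
    show ?thesis using c1 c2 c3 unfolding y_def by simp
  qed
  have Q: "p + 2 + 3 * k \<le> n - 1 \<longrightarrow> pat (C (b + 2)) (p + 2) (p + 2 + 3 * k)" for k
  proof (induction k)
    case 0
    show ?case
    proof
      show "pat (C (b + 2)) (p + 2) (p + 2 + 3 * 0)"
        by (rule pat_intro) (use z2 in simp_all)
    qed
  next
    case (Suc k)
    show ?case
    proof
      assume h: "p + 2 + 3 * Suc k \<le> n - 1"
      have hk: "p + 2 + 3 * k \<le> n - 1" using h by simp
      have pk: "pat (C (b + 2)) (p + 2) (p + 2 + 3 * k)" using Suc hk by simp
      note st = step[OF hk pk]
      have e: "p + 2 + 3 * Suc k = p + 2 + 3 * k + 3" by simp
      show "pat (C (b + 2)) (p + 2) (p + 2 + 3 * Suc k)" unfolding e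
        by (rule pat_ext[OF pk, of k]) (use st h in simp_all)
    qed
  qed
  have pn: "p + 2 \<le> n - 1" using gZ(2)[OF g _ _ _ _ z2] hb hp by simp
  define K where "K = (n - 1 - (p + 2)) div 3"
  have yK: "p + 2 + 3 * K \<le> n - 1" "n - 1 < p + 2 + 3 * K + 3" unfolding K_def using pn by simp_all
  have pK: "pat (C (b + 2)) (p + 2) (p + 2 + 3 * K)" using Q yK by simp
  note st = step[OF yK(1) pK]
  show False
  proof (cases "p + 2 + 3 * K + 3 \<le> n")
    case True
    then have "p + 2 + 3 * K + 3 = n" using yK by simp
    then show False using st True bor[of "b + 2"] hb by simp
  next
    case False
    have pn2: "pat (C (b + 2)) (p + 2) n"
      by (rule pat_ext[OF pK, of K]) (use st False in simp_all)
    show False using IVcore[OF g hb(1) _ hp z0 z1 pn2] hb by simp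
  qed
qed

lemma typeIII_false:
  assumes g: "good m n C" and t: "typeIII m n C i j" shows False
proof -
  have h: "2 \<le> i" "i + 2 \<le> m" "2 \<le> j" "j + 1 \<le> n" "\<not> C (i - 1) (j - 1)" "\<not> C i j"
    "\<not> C (i + 1) (j + 1)" "\<And>l. j + 1 \<le> l \<Longrightarrow> l \<le> n \<Longrightarrow> C (i + 2) l"
    using t unfolding typeIII_def by auto
  have e: "i - 1 + 1 = i" "i - 1 + 2 = i + 1" "i - 1 + 3 = i + 2" "j - 1 + 1 = j" "j - 1 + 2 = j + 1"
    using h by simp_all
  have o: "1 \<le> i - 1" "1 \<le> j - 1" using h by simp_all
  show False using IIIcore[OF g, of "i - 1" "j - 1", unfolded e] h o by simp
qed

lemma typeIV_false:
  assumes g: "good m n C" and t: "typeIV m n C i j" shows False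
proof -
  have h: "2 \<le> i" "i + 1 \<le> m" "2 \<le> j" "j + 1 \<le> n" "\<not> C (i - 1) (j - 1)" "\<not> C i j"
    "\<not> C (i + 1) (j + 1)" "pat (C (i + 1)) (j + 1) n"
    using t unfolding typeIV_def pat_def by auto
  have m2: "i + 2 \<le> m" using gZ(3)[OF g _ _ _ _ h(7)] h by simp
  have e: "i - 1 + 1 = i" "i - 1 + 2 = i + 1" "j - 1 + 1 = j" "j - 1 + 2 = j + 1"
    using h by simp_all
  have o: "1 \<le> i - 1" "1 \<le> j - 1" using h by simp_all
  show False using IVcore[OF g, of "i - 1" "j - 1", unfolded e] h m2 o by simp
qed

theorem mainTheorem10:
  fixes m n :: nat and C :: "nat \<Rightarrow> nat \<Rightarrow> bool"
  assumes "ES m n C"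
  shows "\<not> (\<exists>i j. typeIII m n C i j \<or> typeIV m n C i j \<or>
                  typeIII m n (reflect n C) i j \<or> typeIV m n (reflect n C) i j)"
proof -
  have g: "good m n C" using ES_good[OF assms] .
  have gD: "good m n (reflect n C)" using good_reflect[OF g] .
  show ?thesis using typeIII_false[OF g] typeIV_false[OF g] typeIII_false[OF gD] typeIV_false[OF gD]
    by blast
qed



end
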